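(* Let $\phi(w)=aw+b$ with $a>0$ and $b\in\mathbb{C}$, $\mathrm{Re}(b)\geq 0$, and suppose that either $a=1$ ($\phi$ is of parabolic type or the identity map) or $a\in(1,\infty)$ ($\phi$ is hyperbolic of type II). Then the composition operator $C_{\phi}f=f\circ\phi$ on $H^2(\mathbb{C}_{+})$ is neither positively expansive nor uniformly positively expansive.
   Context: $\mathbb{C}_{+}=\{w\in\mathbb{C}:\mathrm{Re}(w)>0\}$. $H^2(\mathbb{C}_{+})$ is the Hardy space of holomorphic $f$ on $\mathbb{C}_{+}$ with finite norm $\|f\|_2^2=\sup_{0<x<\infty}\frac{1}{\pi}\int_{-\infty}^{\infty}|f(x+iy)|^2\,dy$; $C_\phi$ is bounded on it. An operator $T$ on a Banach space $X$ with unit sphere $S_X$ is positively expansive if for every $z\in S_X$ there is $n\in\mathbb{N}$ with $\|T^nz\|\ge 2$, and uniformly positively expansive if there is $n\in\mathbb{N}$ with $\|T^nz\|\ge2$ for all $z\in S_X$. *)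

theory Defs
  imports "HOL-Analysis.Analysis"
begin

definition rhp :: "complex set" where
  "rhp = {w. Re w > 0}"

text \<open>Squared Hardy norm: sup over x>0 of (1/pi) times the integral over y of |f(x+iy)|^2
  (as an extended nonnegative real, so that finiteness is part of membership).\<close>
definition H2_norm2 :: "(complex \<Rightarrow> complex) \<Rightarrow> ennreal" where
  "H2_norm2 f = (SUP x\<in>{0<..}. ennreal (1 / pi) *
      (\<integral>\<^sup>+ y. ennreal ((cmod (f (Complex x y)))\<^sup>2) \<partial>lborel))"

definition H2 :: "(complex \<Rightarrow> complex) set" where
  "H2 = {f. f holomorphic_on rhp \<and> H2_norm2 f < \<infinity>}"

definition H2_norm :: "(complex \<Rightarrow> complex) \<Rightarrow> real" where
  "H2_norm f = sqrt (enn2real (H2_norm2 f))"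

definition comp_op :: "(complex \<Rightarrow> complex) \<Rightarrow> (complex \<Rightarrow> complex) \<Rightarrow> (complex \<Rightarrow> complex)" where
  "comp_op \<phi> f = f \<circ> \<phi>"

definition pos_expansive :: "'a set \<Rightarrow> ('a \<Rightarrow> real) \<Rightarrow> ('a \<Rightarrow> 'a) \<Rightarrow> bool" where
  "pos_expansive X N T \<longleftrightarrow> (\<forall>z\<in>X. N z = 1 \<longrightarrow> (\<exists>n::nat. n \<ge> 1 \<and> N ((T ^^ n) z) \<ge> 2))"

definition unif_pos_expansive :: "'a set \<Rightarrow> ('a \<Rightarrow> real) \<Rightarrow> ('a \<Rightarrow> 'a) \<Rightarrow> bool" where
  "unif_pos_expansive X N T \<longleftrightarrow> (\<exists>n::nat. n \<ge> 1 \<and> (\<forall>z\<in>X. N z = 1 \<longrightarrow> N ((T ^^ n) z) \<ge> 2))"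

end

theory Submission imports Defs "HOL-Probability.Sinc_Integral" begin
lemma meas_slice:
  assumes "continuous_on rhp f" "x > 0"
  shows "(\<lambda>y. ennreal ((cmod (f (Complex x y)))\<^sup>2)) \<in> borel_measurable borel"
proof -
  have "continuous_on UNIV (\<lambda>y. Complex x y)"
    by (intro continuous_intros)
  then have c1: "continuous_on UNIV (\<lambda>y. f (Complex x y))"
    by (rule continuous_on_compose2[OF assms(1)]) (use assms(2) in \<open>auto simp: rhp_def\<close>)
  have "continuous_on UNIV (\<lambda>y. (cmod (f (Complex x y)))\<^sup>2)"
    by (intro continuous_intros c1)
  then have "(\<lambda>y. (cmod (f (Complex x y)))\<^sup>2) \<in> borel_measurable borel"
    by (rule borel_measurable_continuous_onI)
  then show ?thesis by measurable
qed

lemma step: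
  assumes f: "continuous_on rhp f" and c: "c \<ge> 1" and d: "Re d \<ge> 0"
  shows "H2_norm2 (f \<circ> (\<lambda>w. complex_of_real c * w + d)) \<le> H2_norm2 f"
  unfolding H2_norm2_def
proof (rule SUP_least)
  fix x :: real assume "x \<in> {0<..}"
  then have x: "x > 0" by simp
  define x' where "x' = c * x + Re d"
  have x': "x' > 0" using x c d unfolding x'_def
    by (intro add_pos_nonneg mult_pos_pos) auto
  define h where "h y = ennreal ((cmod (f (Complex x' y)))\<^sup>2)" for y
  have hm: "h \<in> borel_measurable borel" unfolding h_def by (rule meas_slice[OF f x'])
  have eq: "complex_of_real c * Complex x y + d = Complex x' (Im d + c * y)" for y
    by (simp add: complex_eq_iff x'_def)
  have "(\<integral>\<^sup>+ y. ennreal ((cmod ((f \<circ> (\<lambda>w. complex_of_real c * w + d)) (Complex x y)))\<^sup>2) \<partial>lborel)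
      = (\<integral>\<^sup>+ y. h (Im d + c * y) \<partial>lborel)"
    by (simp add: eq h_def)
  also have "\<dots> \<le> ennreal \<bar>c\<bar> * (\<integral>\<^sup>+ y. h (Im d + c * y) \<partial>lborel)"
  proof -
    have "1 \<le> ennreal \<bar>c\<bar>" using c by simp
    then show ?thesis
      by (metis mult.left_neutral mult_right_mono zero_le)
  qed
  also have "\<dots> = (\<integral>\<^sup>+ y. h y \<partial>lborel)"
    using nn_integral_real_affine[OF hm, of c "Im d"] c by simp
  finally have le: "(\<integral>\<^sup>+ y. ennreal ((cmod ((f \<circ> (\<lambda>w. complex_of_real c * w + d)) (Complex x y)))\<^sup>2) \<partial>lborel)
      \<le> (\<integral>\<^sup>+ y. h y \<partial>lborel)" .
  show "ennreal (1 / pi) * (\<integral>\<^sup>+ y. ennreal ((cmod ((f \<circ> (\<lambda>w. complex_of_real c * w + d)) (Complex x y)))\<^sup>2) \<partial>lborel)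
     \<le> (SUP x\<in>{0<..}. ennreal (1 / pi) * (\<integral>\<^sup>+ y. ennreal ((cmod (f (Complex x y)))\<^sup>2) \<partial>lborel))"
    apply (rule SUP_upper2[of x'])
    using x' apply simp
    using le unfolding h_def by (intro mult_left_mono) auto
qed
definition g0 :: "complex \<Rightarrow> complex" where "g0 w = 1 / (w + 1)"

lemma g0_holo: "g0 holomorphic_on rhp"
proof -
  have "w + 1 \<noteq> 0" if "w \<in> rhp" for w
    using that by (auto simp: rhp_def complex_eq_iff)
  then show ?thesis unfolding g0_def by (auto intro!: holomorphic_intros)
qed

lemma g0_sq: "(cmod (g0 (Complex x y)))\<^sup>2 = 1 / ((x+1)\<^sup>2 + y\<^sup>2)"
proof -
  have "Complex x y + 1 = Complex (x+1) y" by (simp add: complex_eq_iff)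
  then show ?thesis unfolding g0_def
    by (simp add: norm_divide power_divide cmod_power2)
qed

lemma g0_fin: "H2_norm2 g0 < \<infinity>"
proof -
  have int: "integrable lborel (\<lambda>y::real. inverse (1 + y^2))"
    using integrable_inverse_1_plus_square by (simp add: set_integrable_def einterval_def)
  have fin: "(\<integral>\<^sup>+ y. ennreal (norm (inverse (1 + y^2::real))) \<partial>lborel) < \<infinity>"
    using integrableD(2)[OF int] by (simp add: top.not_eq_extremum)
  have "H2_norm2 g0 \<le> ennreal (1/pi) * (\<integral>\<^sup>+ y. ennreal (norm (inverse (1 + y^2::real))) \<partial>lborel)"
    unfolding H2_norm2_def
  proof (rule SUP_least, rule mult_left_mono)
    fix x :: real assume "x \<in> {0<..}"
    then have x: "x > 0" by simp
    show "(\<integral>\<^sup>+ y. ennreal ((cmod (g0 (Complex x y)))\<^sup>2) \<partial>lborel)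
       \<le> (\<integral>\<^sup>+ y. ennreal (norm (inverse (1 + y^2::real))) \<partial>lborel)"
    proof (rule nn_integral_mono)
      fix y :: real
      have "1 \<le> (x+1)\<^sup>2" using x by (intro one_le_power) simp
      then have "1 / ((x+1)\<^sup>2 + y\<^sup>2) \<le> 1 / (1 + y^2)"
        by (intro divide_left_mono) (auto intro!: mult_pos_pos add_pos_nonneg)
      then have "1 / ((x+1)\<^sup>2 + y\<^sup>2) \<le> inverse (1 + y^2)"
        by (simp add: inverse_eq_divide)
      then show "ennreal ((cmod (g0 (Complex x y)))\<^sup>2) \<le> ennreal (norm (inverse (1 + y^2::real)))"
        by (simp add: g0_sq ennreal_leI)
    qed
  qed simp
  also have "\<dots> < \<infinity>" using fin by (simp add: ennreal_mult_less_top)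
  finally show ?thesis .
qed

lemma g0_pos: "H2_norm2 g0 > 0"
proof -
  have I: "(\<integral>\<^sup>+ y. ennreal (1/5) * indicator {0..1::real} y \<partial>lborel) = ennreal (1/5) * emeasure lborel {0..1::real}"
    by (rule nn_integral_cmult_indicator) simp
  have "ennreal (1/5) * emeasure lborel {0..1::real} \<le> (\<integral>\<^sup>+ y. ennreal ((cmod (g0 (Complex 1 y)))\<^sup>2) \<partial>lborel)"
    unfolding I[symmetric]
  proof (rule nn_integral_mono)
    fix y :: real
    show "ennreal (1/5) * indicator {0..1} y \<le> ennreal ((cmod (g0 (Complex 1 y)))\<^sup>2)"
    proof (cases "y \<in> {0..1}")
      case True
      then have "y\<^sup>2 \<le> 1" by (simp add: power_le_one)
      then have "1/5 \<le> 1 / ((1+1)\<^sup>2 + y\<^sup>2)" by (simp add: divide_simps add_pos_nonneg)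
      then show ?thesis using True by (simp add: g0_sq ennreal_leI)
    qed simp
  qed
  then have "ennreal (1/pi) * (ennreal (1/5) * 1) \<le> ennreal (1/pi) * (\<integral>\<^sup>+ y. ennreal ((cmod (g0 (Complex 1 y)))\<^sup>2) \<partial>lborel)"
    by (intro mult_left_mono) auto
  also have "\<dots> \<le> H2_norm2 g0" unfolding H2_norm2_def
    by (rule SUP_upper2[of 1]) auto
  finally have "ennreal (1/pi) * (ennreal (1/5) * 1) \<le> H2_norm2 g0" .
  moreover have "0 < ennreal (1/pi) * (ennreal (1/5) * 1)"
    by (simp add: ennreal_mult'[symmetric] ennreal_zero_less_mult_iff)
  ultimately show ?thesis by order
qed

lemma unit_exists: "\<exists>z\<in>H2. H2_norm z = 1"
proof -
  define N where "N = enn2real (H2_norm2 g0)"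
  have N: "H2_norm2 g0 = ennreal N" using g0_fin unfolding N_def by (simp add: less_top[symmetric] )
  have Npos: "N > 0" using g0_pos N by simp
  define k where "k = 1 / sqrt N"
  define z where "z w = complex_of_real k * g0 w" for w
  have sq: "(cmod (z w))\<^sup>2 = k\<^sup>2 * (cmod (g0 w))\<^sup>2" for w
    unfolding z_def norm_mult power_mult_distrib by simp
  have cont: "continuous_on rhp g0" by (rule holomorphic_on_imp_continuous_on[OF g0_holo])
  have "H2_norm2 z = (SUP x\<in>{0<..}. ennreal (k\<^sup>2) * (ennreal (1 / pi) *
      (\<integral>\<^sup>+ y. ennreal ((cmod (g0 (Complex x y)))\<^sup>2) \<partial>lborel)))"
    unfolding H2_norm2_def
  proof (rule SUP_cong[OF refl])
    fix x :: real assume "x \<in> {0<..}"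
    then have m: "(\<lambda>y. ennreal ((cmod (g0 (Complex x y)))\<^sup>2)) \<in> borel_measurable borel"
      by (intro meas_slice[OF cont]) auto
    have "(\<integral>\<^sup>+ y. ennreal ((cmod (z (Complex x y)))\<^sup>2) \<partial>lborel)
        = (\<integral>\<^sup>+ y. ennreal (k\<^sup>2) * ennreal ((cmod (g0 (Complex x y)))\<^sup>2) \<partial>lborel)"
      by (simp add: sq ennreal_mult)
    also have "\<dots> = ennreal (k\<^sup>2) * (\<integral>\<^sup>+ y. ennreal ((cmod (g0 (Complex x y)))\<^sup>2) \<partial>lborel)"
      using m by (simp add: nn_integral_cmult)
    finally show "ennreal (1 / pi) * (\<integral>\<^sup>+ y. ennreal ((cmod (z (Complex x y)))\<^sup>2) \<partial>lborel)
        = ennreal (k\<^sup>2) * (ennreal (1 / pi) * (\<integral>\<^sup>+ y. ennreal ((cmod (g0 (Complex x y)))\<^sup>2) \<partial>lborel))"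
      by (simp add: mult.left_commute)
  qed
  also have "\<dots> = ennreal (k\<^sup>2) * H2_norm2 g0"
    unfolding H2_norm2_def by (rule SUP_mult_left_ennreal[symmetric])
  also have "\<dots> = ennreal 1"
    using Npos by (simp add: N k_def ennreal_mult[symmetric] power_divide)
  finally have z2: "H2_norm2 z = 1" by simp
  have "z holomorphic_on rhp" unfolding z_def by (intro holomorphic_intros g0_holo)
  then have "z \<in> H2" using z2 by (simp add: H2_def)
  moreover have "H2_norm z = 1" by (simp add: H2_norm_def z2)
  ultimately show ?thesis by blast
qed
theorem proposition3p4:
  fixes a :: real and b :: complex
  assumes "a > 0" and "Re b \<ge> 0" and "a = 1 \<or> a > 1"
  shows "\<not> pos_expansive H2 H2_norm (comp_op (\<lambda>w. complex_of_real a * w + b))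
       \<and> \<not> unif_pos_expansive H2 H2_norm (comp_op (\<lambda>w. complex_of_real a * w + b))"
proof -
  define T where "T = comp_op (\<lambda>w. complex_of_real a * w + b)"
  have a1: "a \<ge> 1" using assms(3) by auto
  have maps: "(\<lambda>w. complex_of_real a * w + b) ` rhp \<subseteq> rhp"
    using assms(1,2) by (auto simp: rhp_def intro!: add_pos_nonneg mult_pos_pos)
  obtain z where z: "z \<in> H2" "H2_norm z = 1" using unit_exists by blast
  have it: "(T ^^ n) z holomorphic_on rhp \<and> H2_norm2 ((T ^^ n) z) \<le> H2_norm2 z" for n
  proof (induction n)
    case 0 then show ?case using z by (simp add: H2_def)
  next
    case (Suc n)
    have hol: "(\<lambda>w. complex_of_real a * w + b) holomorphic_on rhp" by (intro holomorphic_intros)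
    have eq: "(T ^^ Suc n) z = (T ^^ n) z \<circ> (\<lambda>w. complex_of_real a * w + b)" by (simp add: T_def comp_op_def)
    have "((T ^^ n) z \<circ> (\<lambda>w. complex_of_real a * w + b)) holomorphic_on rhp"
      using Suc.IH hol maps by (intro holomorphic_on_compose_gen) auto
    moreover have "H2_norm2 ((T ^^ n) z \<circ> (\<lambda>w. complex_of_real a * w + b)) \<le> H2_norm2 ((T ^^ n) z)"
      using Suc.IH a1 assms(2) by (intro step holomorphic_on_imp_continuous_on) auto
    ultimately show ?case using Suc.IH unfolding eq by (meson order_trans)
  qed
  have small: "H2_norm ((T ^^ n) z) < 2" for n
  proof -
    have fin: "H2_norm2 z < top" using z by (simp add: H2_def)
    have "enn2real (H2_norm2 ((T ^^ n) z)) \<le> enn2real (H2_norm2 z)"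
      using it[of n] fin by (intro enn2real_mono) auto
    then have "H2_norm ((T ^^ n) z) \<le> H2_norm z" unfolding H2_norm_def by simp
    then show ?thesis using z by simp
  qed
  have np: "\<not> pos_expansive H2 H2_norm T"
    unfolding pos_expansive_def using z small by (metis not_le)
  moreover have "\<not> unif_pos_expansive H2 H2_norm T"
    unfolding unif_pos_expansive_def using z small by (metis not_le)
  ultimately show ?thesis by (simp add: T_def)
qed

end
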